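(* Let $\mathcal{F}\subseteq\mathcal{P}(\omega)$ be a free filter. Then $C_p(\xi(\mathcal{F}),2^\omega)$ is homeomorphic to $\mathcal{F}^\omega$ (with the product topology).
   Context: For a free filter $\mathcal{F}$ on $\omega$ (i.e., containing all cofinite sets), $\xi(\mathcal{F})$ is the space $\omega\cup\{\infty\}$ in which every point of $\omega$ is isolated and the neighborhoods of $\infty$ are the sets $\{\infty\}\cup A$ with $A\in\mathcal{F}$. For a space $X$, $C_p(X,2^\omega)$ is the set of continuous functions $X\to 2^\omega$ with the topology of pointwise convergence (subspace of $(2^\omega)^X$). $\mathcal{F}$ carries the subspace topology of the Cantor set $2^\omega\cong\mathcal{P}(\omega)$ (subsets identified with characteristic functions). *)

theory Defs
  imports "HOL-Analysis.Analysis"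
begin

definition filter_sets :: "nat filter \<Rightarrow> nat set set" where
  "filter_sets F = {A. eventually (\<lambda>n. n \<in> A) F}"

text \<open>The space xi(F) on omega + {infinity}; None plays the role of infinity,
  Some n the point n of omega.\<close>
definition xi_space :: "nat filter \<Rightarrow> nat option topology" where
  "xi_space F = topology (\<lambda>U. None \<in> U \<longrightarrow> (\<exists>A \<in> filter_sets F. Some ` A \<subseteq> U))"

definition cantor_space :: "(nat \<Rightarrow> bool) topology" where
  "cantor_space = product_topology (\<lambda>_. discrete_topology UNIV) UNIV"

definition Cp_cantor :: "'a topology \<Rightarrow> ('a \<Rightarrow> nat \<Rightarrow> bool) topology" where
  "Cp_cantor X = subtopology (product_topology (\<lambda>_. cantor_space) (topspace X))
                   {f \<in> extensional (topspace X). continuous_map X cantor_space f}"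

text \<open>A family of subsets of omega with the subspace topology of the Cantor set
  (sets identified with characteristic functions).\<close>
definition family_space :: "nat set set \<Rightarrow> (nat \<Rightarrow> bool) topology" where
  "family_space \<F> = subtopology cantor_space ((\<lambda>A n. n \<in> A) ` \<F>)"

end

theory Submission
  imports Defs
begin

lemma xi_istop: "istopology (\<lambda>U. None \<in> U \<longrightarrow> (\<exists>A \<in> filter_sets F. Some ` A \<subseteq> U))"
proof -
  let ?P = "\<lambda>U. None \<in> U \<longrightarrow> (\<exists>A \<in> filter_sets F. Some ` A \<subseteq> U)"
  have 1: "?P (S \<inter> T)" if S: "?P S" and T: "?P T" for S T
  proof
    assume "None \<in> S \<inter> T"
    then obtain A B where "eventually (\<lambda>n. n \<in> A) F" "Some ` A \<subseteq> S"
      "eventually (\<lambda>n. n \<in> B) F" "Some ` B \<subseteq> T" using S T unfolding filter_sets_def by auto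
    then show "\<exists>A\<in>filter_sets F. Some ` A \<subseteq> S \<inter> T"
      unfolding filter_sets_def
    proof (intro bexI[of _ "A \<inter> B"])
      show "Some ` (A \<inter> B) \<subseteq> S \<inter> T" using \<open>Some ` A \<subseteq> S\<close> \<open>Some ` B \<subseteq> T\<close> by blast
      have "eventually (\<lambda>n. n \<in> A \<and> n \<in> B) F"
        by (rule eventually_conj) fact+
      then show "A \<inter> B \<in> {A. eventually (\<lambda>n. n \<in> A) F}" by simp
    qed
  qed
  have 2: "?P (\<Union>K)" if "\<forall>K\<in>K. ?P K" for K
  proof
    assume "None \<in> \<Union>K"
    then obtain U where "U \<in> K" "None \<in> U" by blast
    with that obtain A where "A \<in> filter_sets F" "Some ` A \<subseteq> U" by blast
    with \<open>U \<in> K\<close> show "\<exists>A \<in> filter_sets F. Some ` A \<subseteq> \<Union>K" by blast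
  qed
  show ?thesis unfolding istopology_def using 1 2 by blast
qed

lemma openin_xi: "openin (xi_space F) U \<longleftrightarrow> (None \<in> U \<longrightarrow> (\<exists>A \<in> filter_sets F. Some ` A \<subseteq> U))"
  unfolding xi_space_def using xi_istop by (simp add: topology_inverse')

lemma topspace_xi: "topspace (xi_space F) = UNIV"
proof -
  have "openin (xi_space F) UNIV" unfolding openin_xi filter_sets_def
    by (auto intro: exI[of _ UNIV])
  then show ?thesis by (meson openin_subset top.extremum_unique)
qed

lemma cont_bool_xi:
  "continuous_map (xi_space F) (discrete_topology UNIV) (g :: nat option \<Rightarrow> bool) \<longleftrightarrow>
   eventually (\<lambda>n. g (Some n) = g None) F"
proof
  assume "continuous_map (xi_space F) (discrete_topology UNIV) g"
  then have "\<forall>U. openin (xi_space F) {x \<in> topspace (xi_space F). g x \<in> U}"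
    unfolding continuous_map_def by auto
  then have "openin (xi_space F) {x \<in> topspace (xi_space F). g x \<in> {g None}}"
    by blast
  then obtain A where "A \<in> filter_sets F" "Some ` A \<subseteq> {x. g x = g None}"
    unfolding openin_xi topspace_xi by auto
  then show "eventually (\<lambda>n. g (Some n) = g None) F"
    unfolding filter_sets_def by (auto elim!: eventually_mono)
next
  assume ev: "eventually (\<lambda>n. g (Some n) = g None) F"
  show "continuous_map (xi_space F) (discrete_topology UNIV) g"
    unfolding continuous_map_def
  proof (intro conjI allI impI)
    fix U :: "bool set"
    show "openin (xi_space F) {x \<in> topspace (xi_space F). g x \<in> U}"
      unfolding openin_xi topspace_xi filter_sets_def
      using ev by (intro impI bexI[of _ "{n. g (Some n) = g None}"]) auto
  qed (auto simp: topspace_xi)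
qed

lemma topspace_cantor: "topspace cantor_space = UNIV"
  unfolding cantor_space_def by (simp add: PiE_UNIV_domain)

lemma cont_cantor_iff:
  "continuous_map X cantor_space f \<longleftrightarrow> (\<forall>k. continuous_map X (discrete_topology UNIV) (\<lambda>x. f x k))"
  unfolding cantor_space_def by (rule continuous_map_componentwise_UNIV)

lemma cont_xi_cantor:
  "continuous_map (xi_space F) cantor_space f \<longleftrightarrow> (\<forall>k. eventually (\<lambda>n. f (Some n) k = f None k) F)"
  unfolding cont_cantor_iff cont_bool_xi by simp

lemma cont_bool_iff:
  "continuous_map X (discrete_topology UNIV) (g :: 'a \<Rightarrow> bool) \<longleftrightarrow>
    openin X {x \<in> topspace X. g x} \<and> openin X {x \<in> topspace X. \<not> g x}"
proof
  assume "continuous_map X (discrete_topology UNIV) g"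
  then have "\<forall>U. openin X {x \<in> topspace X. g x \<in> U}"
    unfolding continuous_map_def by auto
  then have "openin X {x \<in> topspace X. g x \<in> {True}}" "openin X {x \<in> topspace X. g x \<in> {False}}"
    by blast+
  then show "openin X {x \<in> topspace X. g x} \<and> openin X {x \<in> topspace X. \<not> g x}" by simp
next
  assume a: "openin X {x \<in> topspace X. g x} \<and> openin X {x \<in> topspace X. \<not> g x}"
  show "continuous_map X (discrete_topology UNIV) g"
    unfolding continuous_map_def
  proof (intro conjI allI impI)
    fix U :: "bool set"
    have eq: "{x \<in> topspace X. g x \<in> U} = (if True \<in> U then {x\<in>topspace X. g x} else {}) \<union>
        (if False \<in> U then {x \<in> topspace X. \<not> g x} else {})"
    proof (intro set_eqI iffI)
      fix x assume "x \<in> {x \<in> topspace X. g x \<in> U}"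
      then show "x \<in> (if True \<in> U then {x\<in>topspace X. g x} else {}) \<union>
        (if False \<in> U then {x \<in> topspace X. \<not> g x} else {})"
        by (cases "g x") auto
    next
      fix x assume "x \<in> (if True \<in> U then {x\<in>topspace X. g x} else {}) \<union>
        (if False \<in> U then {x \<in> topspace X. \<not> g x} else {})"
      then show "x \<in> {x \<in> topspace X. g x \<in> U}"
        by (cases "True \<in> U"; cases "False \<in> U"; cases "g x") auto
    qed
    show "openin X {x \<in> topspace X. g x \<in> U}"
      unfolding eq using a by (intro openin_Un) auto
  qed auto
qed

lemma cont_bool_eq:
  assumes "continuous_map X (discrete_topology UNIV) (p :: 'a \<Rightarrow> bool)"
    "continuous_map X (discrete_topology UNIV) q"
  shows "continuous_map X (discrete_topology UNIV) (\<lambda>x. p x = q x)"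
proof -
  have e1: "{x \<in> topspace X. p x = q x} = ({x \<in> topspace X. p x} \<inter> {x \<in> topspace X. q x}) \<union>
     ({x \<in> topspace X. \<not> p x} \<inter> {x \<in> topspace X. \<not> q x})" by auto
  have e2: "{x \<in> topspace X. \<not> (p x = q x)} = ({x \<in> topspace X. p x} \<inter> {x \<in> topspace X. \<not> q x}) \<union>
     ({x \<in> topspace X. \<not> p x} \<inter> {x \<in> topspace X. q x})" by auto
  from assms have o: "openin X {x \<in> topspace X. p x}" "openin X {x \<in> topspace X. \<not> p x}"
     "openin X {x \<in> topspace X. q x}" "openin X {x \<in> topspace X. \<not> q x}"
    unfolding cont_bool_iff by auto
  show ?thesis unfolding cont_bool_iff e1 e2
    by (intro conjI openin_Un openin_Int o)
qed

definition Phi :: "(nat option \<Rightarrow> nat \<Rightarrow> bool) \<Rightarrow> nat \<Rightarrow> nat \<Rightarrow> bool" where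
  "Phi f j n = (if n = 0 then (if even j then f None (j div 2)
                 else (f (Some 0) (j div 2) = f None (j div 2)))
               else (f (Some n) j = f None j))"

definition Psi :: "(nat \<Rightarrow> nat \<Rightarrow> bool) \<Rightarrow> nat option \<Rightarrow> nat \<Rightarrow> bool" where
  "Psi a x k = (case x of None \<Rightarrow> a (2*k) 0
                | Some n \<Rightarrow> (if n = 0 then (a (2*k+1) 0 = a (2*k) 0) else (a k n = a (2*k) 0)))"

lemma bxor: "(((p::bool) = q) = q) = p" by blast

lemma Psi_Phi: "Psi (Phi f) = f"
proof (intro ext)
  fix x k show "Psi (Phi f) x k = f x k"
  proof (cases x)
    case None then show ?thesis by (simp add: Psi_def Phi_def)
  next
    case (Some m) then show ?thesis by (cases "m = 0") (simp_all add: Psi_def Phi_def bxor)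
  qed
qed

lemma Phi_Psi: "Phi (Psi a) = a"
proof (intro ext)
  fix j n show "Phi (Psi a) j n = a j n"
  proof (cases "n = 0")
    case True
    show ?thesis
    proof (cases "even j")
      case True
      then obtain k where "j = 2*k" by (auto elim: evenE)
      with \<open>n = 0\<close> show ?thesis by (simp add: Psi_def Phi_def)
    next
      case False
      then obtain k where "j = 2*k+1" by (auto elim: oddE)
      with \<open>n = 0\<close> show ?thesis by (simp add: Psi_def Phi_def bxor)
    qed
  next
    case False
    then show ?thesis by (simp add: Psi_def Phi_def bxor)
  qed
qed

lemma ev_nz:
  assumes "F \<le> cofinite"
  shows "eventually (\<lambda>n::nat. n \<noteq> 0) F"
proof -
  have "eventually (\<lambda>n::nat. n \<noteq> 0) cofinite" by (simp add: eventually_cofinite)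
  then show ?thesis using assms by (simp add: le_filter_def)
qed

lemma ev_cong_nz:
  fixes F :: "nat filter"
  assumes "F \<le> cofinite" "\<And>n. n \<noteq> 0 \<Longrightarrow> P n = Q n"
  shows "eventually P F = eventually Q F"
proof -
  have "eventually (\<lambda>n. P n = Q n) F"
    using ev_nz[OF assms(1)] by (rule eventually_mono) (use assms(2) in auto)
  then show ?thesis by (rule eventually_subst)
qed

lemma topspace_Cp:
  "topspace (Cp_cantor (xi_space F)) = {f. \<forall>k. eventually (\<lambda>n. f (Some n) k = f None k) F}"
  unfolding Cp_cantor_def topspace_xi
  by (auto simp: topspace_cantor PiE_UNIV_domain cont_xi_cantor)

lemma topspace_T:
  "topspace (product_topology (\<lambda>_::nat. family_space (filter_sets F)) UNIV) =
    {a. \<forall>j. eventually (\<lambda>n. a j n) F}"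
proof -
  have eqv: "b \<in> (\<lambda>A n. n \<in> A) ` filter_sets F \<longleftrightarrow> eventually b F" for b :: "nat \<Rightarrow> bool"
  proof
    assume "b \<in> (\<lambda>A n. n \<in> A) ` filter_sets F"
    then show "eventually b F" unfolding filter_sets_def by auto
  next
    assume "eventually b F"
    then have "{n. b n} \<in> filter_sets F" unfolding filter_sets_def by simp
    moreover have "b = (\<lambda>n. n \<in> {n. b n})" by simp
    ultimately show "b \<in> (\<lambda>A n. n \<in> A) ` filter_sets F" by blast
  qed
  show ?thesis
    unfolding family_space_def by (auto simp: topspace_cantor PiE_UNIV_domain Pi_iff eqv)
qed

lemma ev_Cp: "continuous_map (Cp_cantor (xi_space F)) (discrete_topology UNIV) (\<lambda>f. f x k)"
proof -
  have 1: "continuous_map (product_topology (\<lambda>_. cantor_space) (topspace (xi_space F))) cantor_space (\<lambda>f. f x)"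
    by (rule continuous_map_product_projection) (simp add: topspace_xi)
  have 2: "continuous_map cantor_space (discrete_topology UNIV) (\<lambda>g. g k)"
    unfolding cantor_space_def by (rule continuous_map_product_projection) simp
  show ?thesis unfolding Cp_cantor_def
    by (rule continuous_map_from_subtopology) (rule continuous_map_compose[OF 1 2, unfolded o_def])
qed

lemma ev_T: "continuous_map (product_topology (\<lambda>_::nat. family_space (filter_sets F)) UNIV)
   (discrete_topology UNIV) (\<lambda>a. a j n)"
proof -
  have 1: "continuous_map (product_topology (\<lambda>_::nat. family_space (filter_sets F)) UNIV) (family_space (filter_sets F)) (\<lambda>a. a j)"
    by (rule continuous_map_product_projection) simp
  have 2: "continuous_map (family_space (filter_sets F)) (discrete_topology UNIV) (\<lambda>g. g n)"
    unfolding family_space_def cantor_space_def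
    by (rule continuous_map_from_subtopology) (rule continuous_map_product_projection, simp)
  show ?thesis by (rule continuous_map_compose[OF 1 2, unfolded o_def])
qed

theorem mainTheorem6:
  fixes F :: "nat filter"
  assumes "F \<noteq> bot" and "F \<le> cofinite"
  shows "Cp_cantor (xi_space F) homeomorphic_space
         product_topology (\<lambda>_::nat. family_space (filter_sets F)) UNIV"
proof -
  let ?C = "Cp_cantor (xi_space F)"
  let ?T = "product_topology (\<lambda>_::nat. family_space (filter_sets F)) UNIV"
  have c1: "continuous_map ?C ?T Phi"
    unfolding continuous_map_componentwise_UNIV
  proof
    fix j
    have "continuous_map ?C cantor_space (\<lambda>f. Phi f j)"
      unfolding cont_cantor_iff Phi_def
      by (intro allI) (simp add: ev_Cp cont_bool_eq)
    moreover have "(\<lambda>f. Phi f j) \<in> topspace ?C \<rightarrow> (\<lambda>A n. n \<in> A) ` filter_sets F"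
    proof
      fix f assume "f \<in> topspace ?C"
      then have "eventually (\<lambda>n. f (Some n) j = f None j) F" unfolding topspace_Cp by simp
      then have "eventually (\<lambda>n. Phi f j n) F"
        by (subst ev_cong_nz[OF assms(2)]) (auto simp: Phi_def)
      then have "{n. Phi f j n} \<in> filter_sets F" unfolding filter_sets_def by simp
      moreover have "Phi f j = (\<lambda>n. n \<in> {n. Phi f j n})" by simp
      ultimately show "Phi f j \<in> (\<lambda>A n. n \<in> A) ` filter_sets F" by blast
    qed
    ultimately show "continuous_map ?C (family_space (filter_sets F)) (\<lambda>f. Phi f j)"
      unfolding family_space_def by (rule continuous_map_into_subtopology)
  qed
  have c2: "continuous_map ?T ?C Psi"
    unfolding Cp_cantor_def
  proof (rule continuous_map_into_subtopology)
    show "continuous_map ?T (product_topology (\<lambda>_. cantor_space) (topspace (xi_space F))) Psi"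
      unfolding topspace_xi continuous_map_componentwise_UNIV
    proof
      fix x show "continuous_map ?T cantor_space (\<lambda>a. Psi a x)"
        unfolding cont_cantor_iff Psi_def
        by (cases x) (simp_all add: ev_T cont_bool_eq)
    qed
    show "Psi \<in> topspace ?T \<rightarrow> {f \<in> extensional (topspace (xi_space F)). continuous_map (xi_space F) cantor_space f}"
    proof
      fix a assume "a \<in> topspace ?T"
      then have a: "eventually (\<lambda>n. a j n) F" for j unfolding topspace_T by simp
      have "eventually (\<lambda>n. Psi a (Some n) k = Psi a None k) F" for k
        using a[of k] by (subst ev_cong_nz[OF assms(2)]) (auto simp: Psi_def)
      then show "Psi a \<in> {f \<in> extensional (topspace (xi_space F)). continuous_map (xi_space F) cantor_space f}"
        by (simp add: topspace_xi cont_xi_cantor)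
    qed
  qed
  have "homeomorphic_maps ?C ?T Phi Psi"
    unfolding homeomorphic_maps_def using c1 c2 by (simp add: Psi_Phi Phi_Psi)
  then show ?thesis unfolding homeomorphic_space_def by blast
qed

end
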